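(* Let $t\in\frac{m+n}{2}+\mathbb Z$ and $s:=t+\frac{n-m}{2}-1\in\mathbb Z$. (a) In the non-exceptional case, $t$ satisfies $|t-\kappa|<L+\frac12$ (equivalently, by the characterization of critical numbers, $t\in\mathrm{Crit}$) if and only if $$\check\mu_{a_j}\ge\lambda_j-s\ge\check\mu_{1+a_j}\quad\text{for } j=1,\dots,m.\qquad(I_j)$$ (b) In the exceptional case, $t$ satisfies $|t-\kappa|<L+\frac12$ if and only if $s$ satisfies $(I_j)$ for all $j\neq\frac{m+1}{2}$ together with the middle condition $$\check\mu_{\frac{n-1}{2}}\ge\lambda_{\frac{m+1}{2}}-s\ge\check\mu_{\frac{n+3}{2}}-1\quad\text{if } k \text{ is even},$$ respectively $$\lambda_{\frac{m-1}{2}}\ge\check\mu_{\frac{n+1}{2}}+s\ge\lambda_{\frac{m+3}{2}}\quad\text{if } k \text{ is odd}.$$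
   Context: Let $n,m\ge1$, not both $1$. For $N\ge1$: $L_0^+(N):=\{(w,l)\in\mathbb Z\times\mathbb Z^N:\ l_1>\dots>l_N,\ l_i+l_{N+1-i}=0,\ w+l_i\equiv N+1 \bmod 2\}$; $X^+(N):=\{\mu\in\mathbb Z^N:\mu_1\ge\dots\ge\mu_N\}$; $X_0^+(N):=\{\mu\in X^+(N):\mu_i+\mu_{N+1-i}\text{ independent of } i\}$. Bijection $L_0^+(N)\to X_0^+(N)$: $(w,l)\mapsto\mu$, $\mu_i=\frac{w+l_i+2i-1-N}{2}$; inverse $w=\mu_1+\mu_N$, $l_i=2\mu_i+N+1-w-2i$. Let $\mu\in X_0^+(n)$, $\nu\in X_0^+(m)$ correspond to $(w,l)$, $(w',l')$. The dual weight is $\check\mu_i:=-\mu_{n+1-i}$. Put $\kappa:=\frac12(w+w'+1)$, $L_0:=\min\{|l_i-l'_j|: i\ne\frac{n+1}2\text{ or }j\ne\frac{m+1}2\}$, $L:=L_0/2$. The exceptional case: $n\equiv m\equiv1\bmod 2$. Standing assumptions: $l_1>l'_1$, and for every pair $(i,j)$ either $l_i\neq l'_j$ or ($n,m$ odd, $i=\frac{n+1}2$, $j=\frac{m+1}2$). Position tuple: $a_j\in\{1,\dots,n-1\}$ is the unique integer with $l_{a_j}>l'_j\ge l_{1+a_j}$, $j=1,\dots,m$. An index $j\in\{1,\dots,m-1\}$ is a jump index if $a_j<a_{j+1}$; $k$ is the number of jump indices. $\lambda_j:=\nu_j+a_j-j$. *)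

theory Defs
  imports Complex_Main
begin

text \<open>Weights are functions nat => int, only the values at indices 1..N matter.\<close>

definition X0plus :: "nat \<Rightarrow> (nat \<Rightarrow> int) \<Rightarrow> bool" where
  "X0plus N \<mu> \<longleftrightarrow> (\<forall>i\<in>{1..<N}. \<mu> (Suc i) \<le> \<mu> i) \<and>
     (\<forall>i\<in>{1..N}. \<forall>i'\<in>{1..N}. \<mu> i + \<mu> (N + 1 - i) = \<mu> i' + \<mu> (N + 1 - i'))"

definition wt :: "nat \<Rightarrow> (nat \<Rightarrow> int) \<Rightarrow> int" where
  "wt N \<mu> = \<mu> 1 + \<mu> N"

definition lt :: "nat \<Rightarrow> (nat \<Rightarrow> int) \<Rightarrow> nat \<Rightarrow> int" where
  "lt N \<mu> i = 2 * \<mu> i + int N + 1 - wt N \<mu> - 2 * int i"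

definition dualw :: "nat \<Rightarrow> (nat \<Rightarrow> int) \<Rightarrow> nat \<Rightarrow> int" where
  "dualw N \<mu> i = - \<mu> (N + 1 - i)"

definition kappa :: "nat \<Rightarrow> (nat \<Rightarrow> int) \<Rightarrow> nat \<Rightarrow> (nat \<Rightarrow> int) \<Rightarrow> real" where
  "kappa n \<mu> m \<nu> = (real_of_int (wt n \<mu>) + real_of_int (wt m \<nu>) + 1) / 2"

definition L0 :: "nat \<Rightarrow> (nat \<Rightarrow> int) \<Rightarrow> nat \<Rightarrow> (nat \<Rightarrow> int) \<Rightarrow> int" where
  "L0 n \<mu> m \<nu> = Min {\<bar>lt n \<mu> i - lt m \<nu> j\<bar> | i j.
      i \<in> {1..n} \<and> j \<in> {1..m} \<and> \<not> (2 * i = n + 1 \<and> 2 * j = m + 1)}"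

definition Lc :: "nat \<Rightarrow> (nat \<Rightarrow> int) \<Rightarrow> nat \<Rightarrow> (nat \<Rightarrow> int) \<Rightarrow> real" where
  "Lc n \<mu> m \<nu> = real_of_int (L0 n \<mu> m \<nu>) / 2"

definition apos :: "nat \<Rightarrow> (nat \<Rightarrow> int) \<Rightarrow> nat \<Rightarrow> (nat \<Rightarrow> int) \<Rightarrow> nat \<Rightarrow> nat" where
  "apos n \<mu> m \<nu> j = (THE a. a \<in> {1..n - 1} \<and> lt n \<mu> a > lt m \<nu> j \<and> lt m \<nu> j \<ge> lt n \<mu> (1 + a))"

definition kjumps :: "nat \<Rightarrow> (nat \<Rightarrow> int) \<Rightarrow> nat \<Rightarrow> (nat \<Rightarrow> int) \<Rightarrow> nat" where
  "kjumps n \<mu> m \<nu> = card {j \<in> {1..m - 1}. apos n \<mu> m \<nu> j < apos n \<mu> m \<nu> (j + 1)}"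

definition lam :: "nat \<Rightarrow> (nat \<Rightarrow> int) \<Rightarrow> nat \<Rightarrow> (nat \<Rightarrow> int) \<Rightarrow> nat \<Rightarrow> int" where
  "lam n \<mu> m \<nu> j = \<nu> j + int (apos n \<mu> m \<nu> j) - int j"

definition condI :: "nat \<Rightarrow> (nat \<Rightarrow> int) \<Rightarrow> nat \<Rightarrow> (nat \<Rightarrow> int) \<Rightarrow> int \<Rightarrow> nat \<Rightarrow> bool" where
  "condI n \<mu> m \<nu> s j \<longleftrightarrow>
     dualw n \<mu> (apos n \<mu> m \<nu> j) \<ge> lam n \<mu> m \<nu> j - s \<and>
     lam n \<mu> m \<nu> j - s \<ge> dualw n \<mu> (1 + apos n \<mu> m \<nu> j)"

end

theory Submission imports Defs begin

lemma X0_mono: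
  assumes "X0plus N \<mu>" "1 \<le> i" "i \<le> i'" "i' \<le> N"
  shows "\<mu> i' \<le> \<mu> i"
  using assms(3,4)
proof (induction i')
  case 0 then show ?case using assms(2) by simp
next
  case (Suc k)
  show ?case
  proof (cases "i = Suc k")
    case True then show ?thesis by simp
  next
    case False
    then have "i \<le> k" using Suc.prems by simp
    then have "\<mu> k \<le> \<mu> i" using Suc by simp
    moreover have "\<mu> (Suc k) \<le> \<mu> k"
      using assms(1) \<open>i \<le> k\<close> assms(2) Suc.prems unfolding X0plus_def by auto
    ultimately show ?thesis by simp
  qed
qed

lemma lt_mono:
  assumes "X0plus N \<mu>" "1 \<le> i" "i \<le> i'" "i' \<le> N"
  shows "lt N \<mu> i' \<le> lt N \<mu> i"
  using X0_mono[OF assms] assms(3) unfolding lt_def by simp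

lemma lt_strict:
  assumes "X0plus N \<mu>" "1 \<le> i" "i < i'" "i' \<le> N"
  shows "lt N \<mu> i' < lt N \<mu> i"
  using X0_mono[OF assms(1,2) less_imp_le[OF assms(3)] assms(4)] assms(3) unfolding lt_def by simp

lemma sym_mu:
  assumes "X0plus N \<mu>" "i \<in> {1..N}"
  shows "\<mu> i + \<mu> (N + 1 - i) = wt N \<mu>"
proof -
  have "1 \<in> {1..N}" using assms(2) by simp
  then have "\<mu> i + \<mu> (N + 1 - i) = \<mu> 1 + \<mu> (N + 1 - 1)"
    using assms unfolding X0plus_def by blast
  then show ?thesis unfolding wt_def by simp
qed

lemma lt_sym:
  assumes "X0plus N \<mu>" "i \<in> {1..N}"
  shows "lt N \<mu> (N + 1 - i) = - lt N \<mu> i"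
proof -
  have e: "int (N + 1 - i) = int N + 1 - int i" using assms(2) by auto
  show ?thesis using sym_mu[OF assms] unfolding lt_def e by simp
qed

lemma dual_eq:
  assumes "X0plus N \<mu>" "i \<in> {1..N}"
  shows "dualw N \<mu> i = \<mu> i - wt N \<mu>"
  using sym_mu[OF assms] unfolding dualw_def by simp

lemma card_even_sym:
  fixes J :: "nat set"
  assumes om: "odd m" and sub: "J \<subseteq> {1..m-1}"
    and sym: "\<forall>j\<in>{1..m-1}. j \<in> J \<longleftrightarrow> m - j \<in> J"
  shows "even (card J)"
proof -
  define A where "A = {j\<in>J. 2 * j < m}"
  define B where "B = {j\<in>J. 2 * j > m}"
  have fJ: "finite J" using sub finite_subset by blast
  have JAB: "J = A \<union> B" unfolding A_def B_def using om by (auto, presburger)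
  have dis: "A \<inter> B = {}" unfolding A_def B_def by auto
  have "bij_betw (\<lambda>j. m - j) A B"
  proof (rule bij_betw_byWitness[where f'="\<lambda>j. m - j"])
    show "\<forall>x\<in>A. m - (m - x) = x" unfolding A_def using sub by auto
    show "\<forall>x\<in>B. m - (m - x) = x" unfolding B_def using sub by auto
    show "(\<lambda>j. m - j) ` A \<subseteq> B"
    proof
      fix y assume "y \<in> (\<lambda>j. m - j) ` A"
      then obtain x where x: "x \<in> A" "y = m - x" by blast
      then have "x \<in> {1..m-1}" "x \<in> J" "2 * x < m" unfolding A_def using sub by auto
      then show "y \<in> B" unfolding B_def using sym x by auto
    qed
    show "(\<lambda>j. m - j) ` B \<subseteq> A"
    proof
      fix y assume "y \<in> (\<lambda>j. m - j) ` B"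
      then obtain x where x: "x \<in> B" "y = m - x" by blast
      then have "x \<in> {1..m-1}" "x \<in> J" "2 * x > m" unfolding B_def using sub by auto
      then show "y \<in> A" unfolding A_def using sym x by auto
    qed
  qed
  then have "card A = card B" by (rule bij_betw_same_card)
  moreover have "card J = card A + card B"
    unfolding JAB using fJ JAB dis by (simp add: card_Un_disjoint)
  ultimately show ?thesis by simp
qed

context
  fixes n m :: nat and \<mu> \<nu> :: "nat \<Rightarrow> int"
  assumes n1: "n \<ge> 1" and m1: "m \<ge> 1" and nm: "\<not> (n = 1 \<and> m = 1)"
    and Xm: "X0plus n \<mu>" and Xn: "X0plus m \<nu>"
    and top: "lt n \<mu> 1 > lt m \<nu> 1"
    and dist: "\<forall>i\<in>{1..n}. \<forall>j\<in>{1..m}. lt n \<mu> i \<noteq> lt m \<nu> j \<or>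
           (odd n \<and> odd m \<and> 2 * i = n + 1 \<and> 2 * j = m + 1)"
begin

abbreviation "l \<equiv> lt n \<mu>"
abbreviation "l' \<equiv> lt m \<nu>"
abbreviation "a \<equiv> apos n \<mu> m \<nu>"

lemma lmono: "1 \<le> i \<Longrightarrow> i \<le> i' \<Longrightarrow> i' \<le> n \<Longrightarrow> l i' \<le> l i"
  using lt_mono[OF Xm] by blast
lemma lstrict: "1 \<le> i \<Longrightarrow> i < i' \<Longrightarrow> i' \<le> n \<Longrightarrow> l i' < l i"
  using lt_strict[OF Xm] by blast
lemma l'mono: "1 \<le> i \<Longrightarrow> i \<le> i' \<Longrightarrow> i' \<le> m \<Longrightarrow> l' i' \<le> l' i"
  using lt_mono[OF Xn] by blast
lemma l'strict: "1 \<le> i \<Longrightarrow> i < i' \<Longrightarrow> i' \<le> m \<Longrightarrow> l' i' < l' i"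
  using lt_strict[OF Xn] by blast
lemma lsym: "i \<in> {1..n} \<Longrightarrow> l (n + 1 - i) = - l i"
  using lt_sym[OF Xm] by blast
lemma l'sym: "j \<in> {1..m} \<Longrightarrow> l' (m + 1 - j) = - l' j"
  using lt_sym[OF Xn] by blast

lemma ln: "l n = - l 1" using lsym[of 1] n1 by simp
lemma l'm: "l' m = - l' 1" using l'sym[of 1] m1 by simp

lemma n2: "n \<ge> 2"
proof (rule ccontr)
  assume "\<not> n \<ge> 2"
  then have "n = 1" using n1 by simp
  then have "l 1 = 0" using ln by simp
  moreover have "l' m \<le> l' 1" using l'mono[of 1 m] m1 by simp
  ultimately show False using l'm top by simp
qed

lemma apos_unique:
  assumes "a0 \<in> {1..n-1}" "l a0 > l' j" "l' j \<ge> l (1 + a0)"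
  shows "a j = a0"
  unfolding apos_def
proof (rule the_equality)
  show "a0 \<in> {1..n - 1} \<and> l' j < l a0 \<and> l (1 + a0) \<le> l' j" using assms by simp
next
  fix b assume b: "b \<in> {1..n - 1} \<and> l' j < l b \<and> l (1 + b) \<le> l' j"
  show "b = a0"
  proof (rule ccontr)
    assume "b \<noteq> a0"
    then consider "b < a0" | "a0 < b" by linarith
    then show False
    proof cases
      case 1
      then have "l a0 \<le> l (1 + b)" using lmono[of "1+b" a0] assms(1) by simp
      then show False using b assms by simp
    next
      case 2
      have "b \<le> n" using b by auto
      then have "l b \<le> l (1 + a0)" using lmono[of "1+a0" b] 2 by simp
      then show False using b assms by simp
    qed
  qed
qed

lemma apos_prop:
  assumes j: "j \<in> {1..m}"
  shows "a j \<in> {1..n-1} \<and> l (a j) > l' j \<and> l' j \<ge> l (1 + a j)"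
proof -
  define S where "S = {i \<in> {1..n}. l i > l' j}"
  have fin: "finite S" unfolding S_def by simp
  have "l' j \<le> l' 1" using l'mono[of 1 j] j by simp
  then have "1 \<in> S" unfolding S_def using top n1 by simp
  define a0 where "a0 = Max S"
  have a0S: "a0 \<in> S" unfolding a0_def using fin \<open>1 \<in> S\<close> Max_in by blast
  have "l' m \<le> l' j" using l'mono[of j m] j by simp
  then have "n \<notin> S" unfolding S_def using ln l'm top by simp
  then have "a0 < n" "a0 \<ge> 1" using a0S unfolding S_def by (auto simp: le_less)
  have "1 + a0 \<notin> S"
  proof
    assume "1 + a0 \<in> S"
    then have "1 + a0 \<le> a0" unfolding a0_def using fin Max_ge by blast
    then show False by simp
  qed
  then have "l (1 + a0) \<le> l' j" unfolding S_def using \<open>a0 < n\<close> by auto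
  moreover have "l a0 > l' j" using a0S unfolding S_def by simp
  moreover have "a0 \<in> {1..n-1}" using \<open>a0 < n\<close> \<open>a0 \<ge> 1\<close> by simp
  ultimately show ?thesis using apos_unique by simp
qed

lemma below_a:
  assumes "j \<in> {1..m}" "i \<in> {1..n}" "l i > l' j"
  shows "l (a j) \<le> l i"
proof -
  have p: "a j \<in> {1..n-1}" "l (a j) > l' j" "l' j \<ge> l (1 + a j)" using apos_prop[OF assms(1)] by auto
  have "i \<le> a j"
  proof (rule ccontr)
    assume "\<not> i \<le> a j"
    then have "l i \<le> l (1 + a j)" using lmono[of "1 + a j" i] assms(2) by simp
    then show False using p assms by simp
  qed
  then show ?thesis using lmono[of i "a j"] assms(2) p(1) by simp
qed

lemma above_a:
  assumes "j \<in> {1..m}" "i \<in> {1..n}" "l i \<le> l' j"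
  shows "l i \<le> l (1 + a j)"
proof -
  have p: "a j \<in> {1..n-1}" "l (a j) > l' j" "l' j \<ge> l (1 + a j)" using apos_prop[OF assms(1)] by auto
  have "1 + a j \<le> i"
  proof (rule ccontr)
    assume "\<not> 1 + a j \<le> i"
    then have "l (a j) \<le> l i" using lmono[of i "a j"] assms(2) p(1) by simp
    then show False using p assms by simp
  qed
  then show ?thesis using lmono[of "1 + a j" i] assms(2) by simp
qed

abbreviation "XX s \<equiv> 2 * s - int n + int m + 1 - wt n \<mu> - wt m \<nu>"

lemma condI_iff:
  assumes j: "j \<in> {1..m}"
  shows "condI n \<mu> m \<nu> s j \<longleftrightarrow>
    (XX s \<ge> 1 - (l (a j) - l' j) \<and> XX s \<le> l' j - l (1 + a j) - 1)"
proof -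
  have p: "a j \<in> {1..n-1}" using apos_prop[OF j] by auto
  then have q: "a j \<in> {1..n}" "1 + a j \<in> {1..n}" using n2 by auto
  show ?thesis unfolding condI_def lam_def dual_eq[OF Xm q(1)] dual_eq[OF Xm q(2)]
    unfolding lt_def by auto
qed

lemma odd_diff: "odd (XX s - (l i - l' j))"
proof -
  have "XX s - (l i - l' j) = 2 * (s - int n + int m - wt m \<nu> - \<mu> i + int i + \<nu> j - int j) + 1"
    unfolding lt_def by (simp add: algebra_simps)
  then show ?thesis by (subst \<open>_ = _\<close>) simp
qed

lemma pair_strict: "\<bar>XX s\<bar> \<le> \<bar>l i - l' j\<bar> \<longleftrightarrow> \<bar>XX s\<bar> + 1 \<le> \<bar>l i - l' j\<bar>"
proof -
  have o1: "odd (XX s - (l i - l' j))" by (rule odd_diff)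
  then obtain k where k: "XX s - (l i - l' j) = 2*k+1" by (rule oddE)
  have "XX s \<noteq> l i - l' j" using k by presburger
  moreover have "XX s \<noteq> - (l i - l' j)" using k by presburger
  ultimately show ?thesis by linarith
qed

lemma zero_iff:
  assumes "i \<in> {1..n}" "j \<in> {1..m}"
  shows "l i = l' j \<longleftrightarrow> (2 * i = n + 1 \<and> 2 * j = m + 1)"
proof
  assume "l i = l' j" then show "2 * i = n + 1 \<and> 2 * j = m + 1" using dist assms by blast
next
  assume h: "2 * i = n + 1 \<and> 2 * j = m + 1"
  then have "n + 1 - i = i" "m + 1 - j = j" by auto
  then have "l i = 0" "l' j = 0" using lsym[OF assms(1)] l'sym[OF assms(2)] by auto
  then show "l i = l' j" by simp
qed


lemma L0_iff:
  "\<bar>XX s\<bar> \<le> L0 n \<mu> m \<nu> \<longleftrightarrow>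
   (\<forall>i\<in>{1..n}. \<forall>j\<in>{1..m}. \<not> (2 * i = n + 1 \<and> 2 * j = m + 1) \<longrightarrow> \<bar>XX s\<bar> \<le> \<bar>l i - l' j\<bar>)"
proof -
  define PS where "PS = {\<bar>lt n \<mu> i - lt m \<nu> j\<bar> | i j.
      i \<in> {1..n} \<and> j \<in> {1..m} \<and> \<not> (2 * i = n + 1 \<and> 2 * j = m + 1)}"
  have "PS \<subseteq> {\<bar>lt n \<mu> i - lt m \<nu> j\<bar> | i j. i \<in> {1..n} \<and> j \<in> {1..m}}"
    unfolding PS_def by blast
  moreover have "finite {\<bar>lt n \<mu> i - lt m \<nu> j\<bar> | i j. i \<in> {1..n} \<and> j \<in> {1..m}}"
    by (rule finite_image_set2) auto
  ultimately have fin: "finite PS" by (rule finite_subset)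
  have "\<bar>l 1 - l' 1\<bar> \<in> PS" unfolding PS_def using n1 m1 nm by fastforce
  then have ne: "PS \<noteq> {}" by blast
  have L: "L0 n \<mu> m \<nu> = Min PS" unfolding L0_def PS_def by simp
  show ?thesis
  proof
    assume h: "\<bar>XX s\<bar> \<le> L0 n \<mu> m \<nu>"
    show "\<forall>i\<in>{1..n}. \<forall>j\<in>{1..m}. \<not> (2 * i = n + 1 \<and> 2 * j = m + 1) \<longrightarrow> \<bar>XX s\<bar> \<le> \<bar>l i - l' j\<bar>"
    proof (intro ballI impI)
      fix i j assume "i \<in> {1..n}" "j \<in> {1..m}" "\<not> (2 * i = n + 1 \<and> 2 * j = m + 1)"
      then have "\<bar>l i - l' j\<bar> \<in> PS" unfolding PS_def by blast
      then have "Min PS \<le> \<bar>l i - l' j\<bar>" using fin by simp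
      then show "\<bar>XX s\<bar> \<le> \<bar>l i - l' j\<bar>" using h L by simp
    qed
  next
    assume h: "\<forall>i\<in>{1..n}. \<forall>j\<in>{1..m}. \<not> (2 * i = n + 1 \<and> 2 * j = m + 1) \<longrightarrow> \<bar>XX s\<bar> \<le> \<bar>l i - l' j\<bar>"
    have "Min PS \<in> PS" using fin ne by simp
    then obtain i j where "i \<in> {1..n}" "j \<in> {1..m}" "\<not> (2 * i = n + 1 \<and> 2 * j = m + 1)"
       "Min PS = \<bar>l i - l' j\<bar>" unfolding PS_def by blast
    then show "\<bar>XX s\<bar> \<le> L0 n \<mu> m \<nu>" using h L by simp
  qed
qed

abbreviation "AP s \<equiv> \<forall>i\<in>{1..n}. \<forall>j\<in>{1..m}. l i \<noteq> l' j \<longrightarrow> \<bar>XX s\<bar> + 1 \<le> \<bar>l i - l' j\<bar>"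
abbreviation "Pos s \<equiv> \<forall>i\<in>{1..n}. \<forall>j\<in>{1..m}. l i > l' j \<longrightarrow> XX s \<ge> 1 - (l i - l' j)"
abbreviation "Neg s \<equiv> \<forall>i\<in>{1..n}. \<forall>j\<in>{1..m}. l i < l' j \<longrightarrow> XX s \<le> l' j - l i - 1"

lemma L0_AP: "\<bar>XX s\<bar> \<le> L0 n \<mu> m \<nu> \<longleftrightarrow> AP s"
  unfolding L0_iff using zero_iff pair_strict by blast

lemma AP_PN: "AP s \<longleftrightarrow> Pos s \<and> Neg s"
proof
  assume h: "AP s"
  have "Pos s"
  proof (intro ballI impI)
    fix i j assume ij: "i \<in> {1..n}" "j \<in> {1..m}" "l i > l' j"
    then show "XX s \<ge> 1 - (l i - l' j)" using h by fastforce
  qed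
  moreover have "Neg s"
  proof (intro ballI impI)
    fix i j assume ij: "i \<in> {1..n}" "j \<in> {1..m}" "l i < l' j"
    then show "XX s \<le> l' j - l i - 1" using h by fastforce
  qed
  ultimately show "Pos s \<and> Neg s" by simp
next
  assume h: "Pos s \<and> Neg s"
  show "AP s"
  proof (intro ballI impI)
    fix i j assume ij: "i \<in> {1..n}" "j \<in> {1..m}" "l i \<noteq> l' j"
    have i': "n + 1 - i \<in> {1..n}" and j': "m + 1 - j \<in> {1..m}" using ij by auto
    have si: "l (n + 1 - i) = - l i" using lsym ij by simp
    have sj: "l' (m + 1 - j) = - l' j" using l'sym ij by simp
    consider "l i > l' j" | "l i < l' j" using ij by linarith
    then show "\<bar>XX s\<bar> + 1 \<le> \<bar>l i - l' j\<bar>"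
    proof cases
      case 1
      have "XX s \<ge> 1 - (l i - l' j)" using h ij 1 by blast
      moreover have "XX s \<le> l' (m + 1 - j) - l (n + 1 - i) - 1"
        using h i' j' si sj 1 by (metis neg_less_iff_less)
      ultimately show ?thesis using si sj 1 by linarith
    next
      case 2
      have "XX s \<le> l' j - l i - 1" using h ij 2 by blast
      moreover have "XX s \<ge> 1 - (l (n + 1 - i) - l' (m + 1 - j))"
        using h i' j' si sj 2 by (metis neg_less_iff_less)
      ultimately show ?thesis using si sj 2 by linarith
    qed
  qed
qed

abbreviation "Lo s j \<equiv> XX s \<ge> 1 - (l (a j) - l' j)"
abbreviation "Up s j \<equiv> XX s \<le> l' j - l (1 + a j) - 1"

lemma Pos_Lo: "Pos s \<longleftrightarrow> (\<forall>j\<in>{1..m}. Lo s j)"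
proof
  assume h: "Pos s"
  show "\<forall>j\<in>{1..m}. Lo s j"
  proof
    fix j assume j: "j \<in> {1..m}"
    have p: "a j \<in> {1..n-1}" "l (a j) > l' j" using apos_prop[OF j] by auto
    then have "a j \<in> {1..n}" by auto
    then show "Lo s j" using h j p(2) by blast
  qed
next
  assume h: "\<forall>j\<in>{1..m}. Lo s j"
  show "Pos s"
  proof (intro ballI impI)
    fix i j assume ij: "i \<in> {1..n}" "j \<in> {1..m}" "l i > l' j"
    have "l (a j) \<le> l i" using below_a ij by blast
    then show "XX s \<ge> 1 - (l i - l' j)" using h ij by fastforce
  qed
qed

lemma Neg_Up:
  assumes strict: "\<forall>j\<in>{1..m}. l (1 + a j) \<noteq> l' j"
  shows "Neg s \<longleftrightarrow> (\<forall>j\<in>{1..m}. Up s j)"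
proof
  assume h: "Neg s"
  show "\<forall>j\<in>{1..m}. Up s j"
  proof
    fix j assume j: "j \<in> {1..m}"
    have p: "a j \<in> {1..n-1}" "l (1 + a j) \<le> l' j" using apos_prop[OF j] by auto
    have "l (1 + a j) \<noteq> l' j" using strict j by blast
    then have "1 + a j \<in> {1..n}" "l (1 + a j) < l' j" using n2 p by auto
    then show "Up s j" using h j by blast
  qed
next
  assume h: "\<forall>j\<in>{1..m}. Up s j"
  show "Neg s"
  proof (intro ballI impI)
    fix i j assume ij: "i \<in> {1..n}" "j \<in> {1..m}" "l i < l' j"
    have "l i \<le> l (1 + a j)" using above_a ij by simp
    then show "XX s \<le> l' j - l i - 1" using h ij by fastforce
  qed
qed


lemma apos_sym:
  assumes j: "j \<in> {1..m}" and ne: "\<forall>i\<in>{1..n}. l i \<noteq> l' j"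
  shows "a (m + 1 - j) = n - a j"
proof -
  have p: "a j \<in> {1..n-1}" "l (a j) > l' j" "l' j \<ge> l (1 + a j)" using apos_prop[OF j] by auto
  have q: "1 + a j \<in> {1..n}" "a j \<in> {1..n}" using p n2 by auto
  have "l (1 + a j) \<noteq> l' j" using ne q by blast
  have e1: "l (n - a j) = - l (1 + a j)" using lsym[OF q(1)] p by (simp add: Suc_diff_le)
  have e2: "l (1 + (n - a j)) = - l (a j)" using lsym[OF q(2)] p q by (simp add: Suc_diff_le)
  have e3: "l' (m + 1 - j) = - l' j" using l'sym j by simp
  show ?thesis
    by (rule apos_unique) (use p e1 e2 e3 \<open>l (1 + a j) \<noteq> l' j\<close> in auto)
qed

context
  assumes on: "odd n" and om: "odd m"
begin

abbreviation "i0 \<equiv> (n + 1) div 2"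
abbreviation "j0 \<equiv> (m + 1) div 2"

lemma i0: "2 * i0 = n + 1" using on by presburger
lemma j0: "2 * j0 = m + 1" using om by presburger
lemma n3: "n \<ge> 3" using n2 on by presburger
lemma j0r: "j0 \<in> {1..m}" using j0 m1 by auto
lemma i0r: "i0 \<in> {1..n}" "i0 - 1 \<in> {1..n}" "i0 + 1 \<in> {1..n}" "i0 \<ge> 2" using i0 n3 by auto

lemma li0: "l i0 = 0" and l'j0: "l' j0 = 0"
proof -
  have "n + 1 - i0 = i0" using i0 by simp
  then show "l i0 = 0" using lsym[OF i0r(1)] by simp
  have "m + 1 - j0 = j0" using j0 by simp
  then show "l' j0 = 0" using l'sym[OF j0r] by simp
qed

lemma lpos: "l (i0 - 1) > 0" using lstrict[of "i0 - 1" i0] i0r li0 by simp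
lemma lsym0: "l (i0 + 1) = - l (i0 - 1)"
proof -
  have "n + 1 - (i0 - 1) = i0 + 1" using i0 i0r by simp
  then show ?thesis using lsym[OF i0r(2)] by simp
qed

lemma a_j0: "a j0 = i0 - 1"
  by (rule apos_unique) (use i0r li0 l'j0 lpos in auto)

lemma strict_ne: "j \<in> {1..m} \<Longrightarrow> j \<noteq> j0 \<Longrightarrow> i \<in> {1..n} \<Longrightarrow> l i \<noteq> l' j"
  using zero_iff j0 by auto

lemma Neg_exc: "Neg s \<longleftrightarrow> (\<forall>j\<in>{1..m}. j \<noteq> j0 \<longrightarrow> Up s j) \<and> XX s \<le> l (i0 - 1) - 1"
proof
  assume h: "Neg s"
  have "\<forall>j\<in>{1..m}. j \<noteq> j0 \<longrightarrow> Up s j"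
  proof (intro ballI impI)
    fix j assume j: "j \<in> {1..m}" "j \<noteq> j0"
    have p: "a j \<in> {1..n-1}" "l (1 + a j) \<le> l' j" using apos_prop[OF j(1)] by auto
    have q: "1 + a j \<in> {1..n}" using p n2 by auto
    have "l (1 + a j) \<noteq> l' j" using strict_ne j q by blast
    then have "l (1 + a j) < l' j" using p by simp
    then show "Up s j" using h j q by blast
  qed
  moreover have "XX s \<le> l (i0 - 1) - 1"
  proof -
    have "l (i0 + 1) < l' j0" using lsym0 lpos l'j0 by simp
    then have "XX s \<le> l' j0 - l (i0 + 1) - 1" using h i0r j0r by blast
    then show ?thesis using lsym0 l'j0 by simp
  qed
  ultimately show "(\<forall>j\<in>{1..m}. j \<noteq> j0 \<longrightarrow> Up s j) \<and> XX s \<le> l (i0 - 1) - 1" by simp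
next
  assume h: "(\<forall>j\<in>{1..m}. j \<noteq> j0 \<longrightarrow> Up s j) \<and> XX s \<le> l (i0 - 1) - 1"
  show "Neg s"
  proof (intro ballI impI)
    fix i j assume ij: "i \<in> {1..n}" "j \<in> {1..m}" "l i < l' j"
    show "XX s \<le> l' j - l i - 1"
    proof (cases "j = j0")
      case False
      have "l i \<le> l (1 + a j)" using above_a ij by simp
      then show ?thesis using h ij False by fastforce
    next
      case True
      then have "l i < 0" using ij l'j0 by simp
      have "i0 < i"
      proof (rule ccontr)
        assume "\<not> i0 < i"
        then have "l i0 \<le> l i" using lmono[of i i0] ij i0r by simp
        then show False using \<open>l i < 0\<close> li0 by simp
      qed
      then have "l i \<le> l (i0 + 1)" using lmono[of "i0 + 1" i] ij by simp
      then show ?thesis using h True l'j0 lsym0 by simp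
    qed
  qed
qed

lemma mid_even:
  "(dualw n \<mu> ((n - 1) div 2) \<ge> lam n \<mu> m \<nu> ((m + 1) div 2) - s \<and>
    lam n \<mu> m \<nu> ((m + 1) div 2) - s \<ge> dualw n \<mu> ((n + 3) div 2) - 1)
   \<longleftrightarrow> Lo s j0 \<and> XX s \<le> l (i0 - 1) - 1"
proof -
  have e1: "(n - 1) div 2 = i0 - 1" and e2: "(n + 3) div 2 = i0 + 1" using i0 by auto
  have ii: "2 * int i0 = int n + 1" using i0 by linarith
  have iv: "int (i0 - 1) = int i0 - 1" using i0r by auto
  have l0: "2 * \<nu> j0 + int m + 1 - wt m \<nu> - 2 * int j0 = 0" using l'j0 unfolding lt_def .
  have jj: "2 * int j0 = int m + 1" using j0 by linarith
  show ?thesis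
    unfolding e1 e2 dual_eq[OF Xm i0r(2)] dual_eq[OF Xm i0r(3)] lam_def a_j0 l'j0
    using ii iv l0 jj lsym0 unfolding lt_def by (auto simp: algebra_simps)
qed


lemma k_odd:
  assumes "odd (kjumps n \<mu> m \<nu>)"
  shows "m \<ge> 3 \<and> a (j0 - 1) = i0 - 1"
proof (rule ccontr)
  assume nc: "\<not> (m \<ge> 3 \<and> a (j0 - 1) = i0 - 1)"
  define J where "J = {j \<in> {1..m - 1}. a j < a (j + 1)}"
  have kJ: "kjumps n \<mu> m \<nu> = card J" unfolding kjumps_def J_def by simp
  have "even (card J)"
  proof (cases "m \<ge> 3")
    case False
    then have "m = 1" using om m1 by presburger
    then show ?thesis unfolding J_def by simp
  next
    case True
    then have ne: "a (j0 - 1) \<noteq> i0 - 1" using nc by simp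
    have jm: "j0 - 1 \<in> {1..m}" "j0 + 1 \<in> {1..m}" "j0 \<ge> 2" using j0 True by auto
    have "l' (j0 - 1) > l' j0" using l'strict[of "j0 - 1" j0] jm by simp
    then have l'p: "l' (j0 - 1) > 0" using l'j0 by simp
    have pa: "a (j0 - 1) \<in> {1..n-1}" "l (a (j0 - 1)) > l' (j0 - 1)" using apos_prop[OF jm(1)] by auto
    have "a (j0 - 1) < i0"
    proof (rule ccontr)
      assume "\<not> a (j0 - 1) < i0"
      moreover have "a (j0 - 1) \<le> n - 1" using pa(1) by simp
      then have "a (j0 - 1) \<le> n" by linarith
      ultimately have "l (a (j0 - 1)) \<le> l i0" using lmono[of i0 "a (j0 - 1)"] i0r by simp
      then show False using pa l'p li0 by simp
    qed
    then have lt1: "a (j0 - 1) < i0 - 1" using ne by linarith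
    have asym: "a (m + 1 - j) = n - a j" if "j \<in> {1..m}" "j \<noteq> j0" for j
      using apos_sym[OF that(1)] strict_ne[OF that] by blast
    have abnd: "a j \<le> n - 1" if "j \<in> {1..m}" for j using apos_prop[OF that] by auto
    have e: "m + 1 - (j0 - 1) = j0 + 1" using j0 jm by simp
    have aj0p: "a (j0 + 1) = n - a (j0 - 1)" using asym[OF jm(1)] jm e by simp
    have both: "j0 - 1 \<in> J \<and> j0 \<in> J"
    proof -
      have "j0 - 1 + 1 = j0" "j0 - 1 \<le> m - 1" "j0 \<le> m - 1" "1 \<le> j0 - 1" using jm by auto
      then have "j0 - 1 \<in> J" unfolding J_def using lt1 a_j0 by auto
      moreover have "a j0 < a (j0 + 1)" unfolding aj0p a_j0 using lt1 i0 by linarith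
      then have "j0 \<in> J" unfolding J_def using \<open>j0 \<le> m - 1\<close> jm by auto
      ultimately show ?thesis by simp
    qed
    show ?thesis
    proof (rule card_even_sym[OF om])
      show "J \<subseteq> {1..m - 1}" unfolding J_def by auto
      show "\<forall>j\<in>{1..m - 1}. (j \<in> J) = (m - j \<in> J)"
      proof
        fix j assume j: "j \<in> {1..m - 1}"
        show "(j \<in> J) = (m - j \<in> J)"
        proof (cases "j = j0 - 1 \<or> j = j0")
          case True
          show ?thesis
          proof (cases "j = j0 - 1")
            case True
            then have "m - j = j0" using j0 jm(3) by linarith
            then show ?thesis using True both by simp
          next
            case False
            then have "j = j0" using \<open>j = j0 - 1 \<or> j = j0\<close> by simp
            then have "m - j = j0 - 1" using j0 jm(3) by linarith
            then show ?thesis using \<open>j = j0\<close> both by simp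
          qed
        next
          case False
          have r: "j \<in> {1..m}" "j + 1 \<in> {1..m}" "j \<noteq> j0" "j + 1 \<noteq> j0" using j False by auto
          have e1: "a (m - j) = n - a (j + 1)" using asym[OF r(2) r(4)] by simp
          have "m - j + 1 = m + 1 - j" using j by auto
          then have e2: "a (m - j + 1) = n - a j" using asym[OF r(1) r(3)] by simp
          have b1: "a j \<le> n - 1" "a (j + 1) \<le> n - 1" using abnd r by auto
          have "m - j \<in> {1..m - 1}" using j by auto
          then have "(m - j \<in> J) = (a (m - j) < a (m - j + 1))" unfolding J_def by simp
          also have "\<dots> = (a j < a (j + 1))" unfolding e1 e2 using b1 n2 by auto
          also have "\<dots> = (j \<in> J)" unfolding J_def using j by simp
          finally show ?thesis by simp
        qed
      qed
    qed
  qed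
  then show False using assms kJ by simp
qed

lemma mid_odd:
  assumes m3: "m \<ge> 3" and aj: "a (j0 - 1) = i0 - 1"
    and H: "\<forall>j\<in>{1..m}. j \<noteq> j0 \<longrightarrow> Lo s j \<and> Up s j"
  shows "(lam n \<mu> m \<nu> ((m - 1) div 2) \<ge> dualw n \<mu> ((n + 1) div 2) + s \<and>
          dualw n \<mu> ((n + 1) div 2) + s \<ge> lam n \<mu> m \<nu> ((m + 3) div 2))
         \<and> Lo s j0 \<and> XX s \<le> l (i0 - 1) - 1"
proof -
  have jm: "j0 - 1 \<in> {1..m}" "j0 + 1 \<in> {1..m}" "j0 \<ge> 2" "j0 - 1 \<noteq> j0" "j0 + 1 \<noteq> j0"
    using j0 m3 by auto
  have "l' (j0 - 1) > l' j0" using l'strict[of "j0 - 1" j0] jm by simp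
  then have l'p: "l' (j0 - 1) > 0" using l'j0 by simp
  have pa: "l (i0 - 1) > l' (j0 - 1)" using apos_prop[OF jm(1)] aj by auto
  have e: "m + 1 - (j0 - 1) = j0 + 1" using j0 jm by simp
  have "a (m + 1 - (j0 - 1)) = n - a (j0 - 1)"
    using apos_sym[OF jm(1)] strict_ne[OF jm(1) jm(4)] by blast
  moreover have "n - (i0 - 1) = i0" using i0 i0r(4) by linarith
  ultimately have aj1: "a (j0 + 1) = i0" using e aj by simp
  have l'1: "l' (j0 + 1) = - l' (j0 - 1)" using l'sym[OF jm(1)] e by simp
  have U: "XX s \<le> l' (j0 - 1) - l (1 + a (j0 - 1)) - 1" using H jm by blast
  have L: "XX s \<ge> 1 - (l (a (j0 + 1)) - l' (j0 + 1))" using H jm by blast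
  have U': "XX s \<le> l' (j0 - 1) - 1" using U aj i0r li0 by simp
  have L': "XX s \<ge> 1 - l' (j0 - 1)" using L aj1 li0 l'1 by simp
  have e1: "(m - 1) div 2 = j0 - 1" and e2: "(m + 3) div 2 = j0 + 1" and e3: "(n + 1) div 2 = i0"
    using j0 by auto
  have ii: "2 * int i0 = int n + 1" using i0 by linarith
  have jj: "2 * int j0 = int m + 1" using j0 by linarith
  have iv: "int (i0 - 1) = int i0 - 1" "int (j0 - 1) = int j0 - 1" using i0r jm by auto
  have l0: "2 * \<mu> i0 + int n + 1 - wt n \<mu> - 2 * int i0 = 0" using li0 unfolding lt_def .
  have mid: "lam n \<mu> m \<nu> ((m - 1) div 2) \<ge> dualw n \<mu> ((n + 1) div 2) + s \<and>
          dualw n \<mu> ((n + 1) div 2) + s \<ge> lam n \<mu> m \<nu> ((m + 3) div 2)"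
    unfolding e1 e2 dual_eq[OF Xm i0r(1)] lam_def aj aj1
    using U' L' l'1 ii jj iv l0 unfolding lt_def by (simp only: of_nat_add of_nat_1) (intro conjI; smt (verit))
  have "Lo s j0" using L' pa a_j0 l'j0 by simp
  moreover have "XX s \<le> l (i0 - 1) - 1" using U' pa by simp
  ultimately show ?thesis using mid by simp
qed

end

end


theorem proposition3p2:
  fixes n m :: nat and \<mu> \<nu> :: "nat \<Rightarrow> int" and t :: real and s :: int
  assumes "n \<ge> 1" and "m \<ge> 1" and "\<not> (n = 1 \<and> m = 1)"
    and "X0plus n \<mu>" and "X0plus m \<nu>"
    and "lt n \<mu> 1 > lt m \<nu> 1"
    and "\<forall>i\<in>{1..n}. \<forall>j\<in>{1..m}. lt n \<mu> i \<noteq> lt m \<nu> j \<or>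
           (odd n \<and> odd m \<and> 2 * i = n + 1 \<and> 2 * j = m + 1)"
    and "t - (real m + real n) / 2 \<in> \<int>"
    and "real_of_int s = t + (real n - real m) / 2 - 1"
  shows "(\<not> (odd n \<and> odd m) \<longrightarrow>
           (\<bar>t - kappa n \<mu> m \<nu>\<bar> < Lc n \<mu> m \<nu> + 1 / 2 \<longleftrightarrow>
            (\<forall>j\<in>{1..m}. condI n \<mu> m \<nu> s j)))
       \<and> (odd n \<and> odd m \<longrightarrow>
           (\<bar>t - kappa n \<mu> m \<nu>\<bar> < Lc n \<mu> m \<nu> + 1 / 2 \<longleftrightarrow>
            (\<forall>j\<in>{1..m}. j \<noteq> (m + 1) div 2 \<longrightarrow> condI n \<mu> m \<nu> s j) \<and>
            (if even (kjumps n \<mu> m \<nu>) then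
               dualw n \<mu> ((n - 1) div 2) \<ge> lam n \<mu> m \<nu> ((m + 1) div 2) - s \<and>
               lam n \<mu> m \<nu> ((m + 1) div 2) - s \<ge> dualw n \<mu> ((n + 3) div 2) - 1
             else
               lam n \<mu> m \<nu> ((m - 1) div 2) \<ge> dualw n \<mu> ((n + 1) div 2) + s \<and>
               dualw n \<mu> ((n + 1) div 2) + s \<ge> lam n \<mu> m \<nu> ((m + 3) div 2))))"
proof -
  let ?X = "2 * s - int n + int m + 1 - wt n \<mu> - wt m \<nu>"
  let ?l = "lt n \<mu>" and ?l' = "lt m \<nu>" and ?a = "apos n \<mu> m \<nu>"
  note A = assms(1-7)
  have t: "t = real_of_int s - (real n - real m) / 2 + 1" using assms(9) by linarith
  have tk: "t - kappa n \<mu> m \<nu> = real_of_int ?X / 2"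
    unfolding kappa_def t by (simp add: field_simps)
  have LHS: "(\<bar>t - kappa n \<mu> m \<nu>\<bar> < Lc n \<mu> m \<nu> + 1 / 2) \<longleftrightarrow> \<bar>?X\<bar> \<le> L0 n \<mu> m \<nu>"
  proof -
    have "(\<bar>t - kappa n \<mu> m \<nu>\<bar> < Lc n \<mu> m \<nu> + 1 / 2) \<longleftrightarrow>
          real_of_int \<bar>?X\<bar> < real_of_int (L0 n \<mu> m \<nu> + 1)"
      unfolding tk Lc_def by (simp add: field_simps)
    also have "\<dots> \<longleftrightarrow> \<bar>?X\<bar> < L0 n \<mu> m \<nu> + 1" by (rule of_int_less_iff)
    also have "\<dots> \<longleftrightarrow> \<bar>?X\<bar> \<le> L0 n \<mu> m \<nu>" by linarith
    finally show ?thesis .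
  qed
  have PN: "\<bar>?X\<bar> \<le> L0 n \<mu> m \<nu> \<longleftrightarrow>
     (\<forall>j\<in>{1..m}. ?X \<ge> 1 - (?l (?a j) - ?l' j)) \<and>
     (\<forall>i\<in>{1..n}. \<forall>j\<in>{1..m}. ?l i < ?l' j \<longrightarrow> ?X \<le> ?l' j - ?l i - 1)"
    using L0_AP[OF A, of s] AP_PN[OF A, of s] Pos_Lo[OF A, of s] by simp
  have CI: "\<And>j. j \<in> {1..m} \<Longrightarrow> condI n \<mu> m \<nu> s j \<longleftrightarrow>
    (?X \<ge> 1 - (?l (?a j) - ?l' j) \<and> ?X \<le> ?l' j - ?l (1 + ?a j) - 1)"
    using condI_iff[OF A] by blast
  show ?thesis
  proof (intro conjI impI)
    assume ne: "\<not> (odd n \<and> odd m)"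
    have strict: "\<forall>j\<in>{1..m}. ?l (1 + ?a j) \<noteq> ?l' j"
    proof
      fix j assume j: "j \<in> {1..m}"
      have "?a j \<in> {1..n-1}" using apos_prop[OF A j] by blast
      then have "1 + ?a j \<in> {1..n}" by auto
      then show "?l (1 + ?a j) \<noteq> ?l' j" using assms(7) j ne by blast
    qed
    have NU: "(\<forall>i\<in>{1..n}. \<forall>j\<in>{1..m}. ?l i < ?l' j \<longrightarrow> ?X \<le> ?l' j - ?l i - 1) \<longleftrightarrow>
       (\<forall>j\<in>{1..m}. ?X \<le> ?l' j - ?l (1 + ?a j) - 1)"
      using Neg_Up[OF A strict, of s] by simp
    show "(\<bar>t - kappa n \<mu> m \<nu>\<bar> < Lc n \<mu> m \<nu> + 1 / 2) \<longleftrightarrow> (\<forall>j\<in>{1..m}. condI n \<mu> m \<nu> s j)"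
      unfolding LHS PN NU using CI by blast
  next
    assume ex: "odd n \<and> odd m"
    then have on: "odd n" and om: "odd m" by auto
    note B = A on om
    let ?i0 = "(n + 1) div 2" and ?j0 = "(m + 1) div 2"
    have NE: "(\<forall>i\<in>{1..n}. \<forall>j\<in>{1..m}. ?l i < ?l' j \<longrightarrow> ?X \<le> ?l' j - ?l i - 1) \<longleftrightarrow>
       (\<forall>j\<in>{1..m}. j \<noteq> ?j0 \<longrightarrow> ?X \<le> ?l' j - ?l (1 + ?a j) - 1) \<and> ?X \<le> ?l (?i0 - 1) - 1"
      using Neg_exc[OF B, of s] by simp
    have j0r: "?j0 \<in> {1..m}" using j0r[OF B] .
    have L1: "(\<bar>t - kappa n \<mu> m \<nu>\<bar> < Lc n \<mu> m \<nu> + 1 / 2) \<longleftrightarrow>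
      (\<forall>j\<in>{1..m}. j \<noteq> ?j0 \<longrightarrow> condI n \<mu> m \<nu> s j) \<and>
      ?X \<ge> 1 - (?l (?a ?j0) - ?l' ?j0) \<and> ?X \<le> ?l (?i0 - 1) - 1"
    proof -
      have s1: "(\<forall>j\<in>{1..m}. j \<noteq> ?j0 \<longrightarrow> condI n \<mu> m \<nu> s j) \<longleftrightarrow>
        (\<forall>j\<in>{1..m}. j \<noteq> ?j0 \<longrightarrow> ?X \<ge> 1 - (?l (?a j) - ?l' j) \<and> ?X \<le> ?l' j - ?l (1 + ?a j) - 1)"
        using CI by auto
      have s2: "(\<forall>j\<in>{1..m}. ?X \<ge> 1 - (?l (?a j) - ?l' j)) \<longleftrightarrow>
        (\<forall>j\<in>{1..m}. j \<noteq> ?j0 \<longrightarrow> ?X \<ge> 1 - (?l (?a j) - ?l' j)) \<and> ?X \<ge> 1 - (?l (?a ?j0) - ?l' ?j0)"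
        using j0r by auto
      show ?thesis unfolding LHS PN NE s1 s2 by blast
    qed
    show "(\<bar>t - kappa n \<mu> m \<nu>\<bar> < Lc n \<mu> m \<nu> + 1 / 2) \<longleftrightarrow>
            (\<forall>j\<in>{1..m}. j \<noteq> (m + 1) div 2 \<longrightarrow> condI n \<mu> m \<nu> s j) \<and>
            (if even (kjumps n \<mu> m \<nu>) then
               dualw n \<mu> ((n - 1) div 2) \<ge> lam n \<mu> m \<nu> ((m + 1) div 2) - s \<and>
               lam n \<mu> m \<nu> ((m + 1) div 2) - s \<ge> dualw n \<mu> ((n + 3) div 2) - 1
             else
               lam n \<mu> m \<nu> ((m - 1) div 2) \<ge> dualw n \<mu> ((n + 1) div 2) + s \<and>
               dualw n \<mu> ((n + 1) div 2) + s \<ge> lam n \<mu> m \<nu> ((m + 3) div 2))"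
    proof (cases "even (kjumps n \<mu> m \<nu>)")
      case True
      show ?thesis unfolding L1 using True mid_even[OF B, of s] by simp
    next
      case False
      have k: "m \<ge> 3 \<and> ?a (?j0 - 1) = ?i0 - 1" using k_odd[OF B] False by blast
      have mo: "(\<forall>j\<in>{1..m}. j \<noteq> ?j0 \<longrightarrow> condI n \<mu> m \<nu> s j) \<Longrightarrow>
          (lam n \<mu> m \<nu> ((m - 1) div 2) \<ge> dualw n \<mu> ((n + 1) div 2) + s \<and>
          dualw n \<mu> ((n + 1) div 2) + s \<ge> lam n \<mu> m \<nu> ((m + 3) div 2))
         \<and> ?X \<ge> 1 - (?l (?a ?j0) - ?l' ?j0) \<and> ?X \<le> ?l (?i0 - 1) - 1"
      proof -
        assume h: "\<forall>j\<in>{1..m}. j \<noteq> ?j0 \<longrightarrow> condI n \<mu> m \<nu> s j"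
        have "\<forall>j\<in>{1..m}. j \<noteq> ?j0 \<longrightarrow> ?X \<ge> 1 - (?l (?a j) - ?l' j) \<and> ?X \<le> ?l' j - ?l (1 + ?a j) - 1"
          using h CI by blast
        then show ?thesis using mid_odd[OF B, of s] k by blast
      qed
      show ?thesis unfolding L1 using False mo by auto
    qed
  qed
qed

end
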